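(* Let $\alpha,\beta$ be positive integers and let $\mathcal{C}\subseteq\mathbb{F}_q^\alpha\times\mathcal{R}^\beta$ be an $\mathbb{F}_q\mathcal{R}$-skew cyclic code of length $(\alpha,\beta)$. Suppose that the order $|\langle\theta\rangle|$ of $\theta$ divides $\beta$. Then the dual code $\mathcal{C}^\perp$ is also an $\mathbb{F}_q\mathcal{R}$-skew cyclic code of length $(\alpha,\beta)$.
   Context: Let $p$ be a prime, $q=p^m$, $\mathbb{F}_q$ the finite field with $q$ elements, and $\mathcal{R}=\mathbb{F}_q[u]/\langle u^2-u\rangle=\mathbb{F}_q+u\mathbb{F}_q$ (so $u^2=u$). Fix an integer $i$ and let $\Theta$ be the automorphism of $\mathbb{F}_q$ given by $\Theta(a)=a^{p^i}$, and $\theta$ the automorphism of $\mathcal{R}$ given by $\theta(a+ub)=a^{p^i}+ub^{p^i}$ ($a,b\in\mathbb{F}_q$). Let $\eta:\mathcal{R}\to\mathbb{F}_q$, $\eta(a+ub)=a$. The set $\mathbb{F}_q^\alpha\times\mathcal{R}^\beta$ is an $\mathcal{R}$-module under $s*(x_0,\dots,x_{\alpha-1},y_0,\dots,y_{\beta-1})=(\eta(s)x_0,\dots,\eta(s)x_{\alpha-1},sy_0,\dots,sy_{\beta-1})$. An $\mathbb{F}_q\mathcal{R}$-skew cyclic code of length $(\alpha,\beta)$ is an $\mathcal{R}$-submodule $\mathcal{C}$ of $\mathbb{F}_q^\alpha\times\mathcal{R}^\beta$ such that for every $c=(x_0,\dots,x_{\alpha-1},y_0,\dots,y_{\beta-1})\in\mathcal{C}$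 also $\sigma(c)=(\Theta(x_{\alpha-1}),\Theta(x_0),\dots,\Theta(x_{\alpha-2}),\theta(y_{\beta-1}),\theta(y_0),\dots,\theta(y_{\beta-2}))\in\mathcal{C}$. For $l=(x_0,\dots,x_{\alpha-1},y_0,\dots,y_{\beta-1})$ and $l'=(x'_0,\dots,x'_{\alpha-1},y'_0,\dots,y'_{\beta-1})$ in $\mathbb{F}_q^\alpha\times\mathcal{R}^\beta$ the inner product is $l\cdot l'=u\sum_{i=0}^{\alpha-1}x_ix'_i+\sum_{j=0}^{\beta-1}y_jy'_j\in\mathcal{R}$, and $\mathcal{C}^\perp=\{l'\in\mathbb{F}_q^\alpha\times\mathcal{R}^\beta : l\cdot l'=0 \text{ for all } l\in\mathcal{C}\}$. *)

theory Defs
  imports Main "HOL-Computational_Algebra.Primes"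
begin

text \<open>The ring R = F_q + u F_q (u^2 = u) is represented by pairs (a,b) standing for a + u b.\<close>

definition R_add :: "'a::field \<times> 'a \<Rightarrow> 'a \<times> 'a \<Rightarrow> 'a \<times> 'a" where
  "R_add r s = (fst r + fst s, snd r + snd s)"

definition R_mult :: "'a::field \<times> 'a \<Rightarrow> 'a \<times> 'a \<Rightarrow> 'a \<times> 'a" where
  "R_mult r s = (fst r * fst s, fst r * snd s + snd r * fst s + snd r * snd s)"

definition R_zero :: "'a::field \<times> 'a" where
  "R_zero = (0, 0)"

definition R_u :: "'a::field \<times> 'a" where
  "R_u = (0, 1)"

definition R_sum :: "('a::field \<times> 'a) list \<Rightarrow> 'a \<times> 'a" where
  "R_sum rs = foldr R_add rs R_zero"

definition eta :: "'a::field \<times> 'a \<Rightarrow> 'a" where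
  "eta r = fst r"

definition Theta :: "nat \<Rightarrow> nat \<Rightarrow> 'a::field \<Rightarrow> 'a" where
  "Theta p i a = a ^ (p ^ i)"

definition theta :: "nat \<Rightarrow> nat \<Rightarrow> 'a::field \<times> 'a \<Rightarrow> 'a \<times> 'a" where
  "theta p i r = (fst r ^ (p ^ i), snd r ^ (p ^ i))"

definition theta_order :: "nat \<Rightarrow> nat \<Rightarrow> 'a::field itself \<Rightarrow> nat" where
  "theta_order p i _ = (LEAST k. 0 < k \<and> (\<forall>r::'a \<times> 'a. (theta p i ^^ k) r = r))"

text \<open>Elements of F_q^alpha x R^beta: pairs of lists of lengths alpha and beta.\<close>
type_synonym 'a word = "'a list \<times> ('a \<times> 'a) list"

definition ambient :: "nat \<Rightarrow> nat \<Rightarrow> ('a::field) word set" where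
  "ambient \<alpha> \<beta> = {(x, y). length x = \<alpha> \<and> length y = \<beta>}"

definition word_add :: "('a::field) word \<Rightarrow> 'a word \<Rightarrow> 'a word" where
  "word_add c d = (map2 (+) (fst c) (fst d), map2 R_add (snd c) (snd d))"

definition word_zero :: "nat \<Rightarrow> nat \<Rightarrow> ('a::field) word" where
  "word_zero \<alpha> \<beta> = (replicate \<alpha> 0, replicate \<beta> R_zero)"

definition smult_word :: "'a::field \<times> 'a \<Rightarrow> 'a word \<Rightarrow> 'a word" where
  "smult_word s c = (map (\<lambda>x. eta s * x) (fst c), map (R_mult s) (snd c))"

definition is_R_submodule :: "nat \<Rightarrow> nat \<Rightarrow> ('a::field) word set \<Rightarrow> bool" where
  "is_R_submodule \<alpha> \<beta> C \<longleftrightarrow>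
     C \<subseteq> ambient \<alpha> \<beta> \<and> word_zero \<alpha> \<beta> \<in> C \<and>
     (\<forall>c\<in>C. \<forall>d\<in>C. word_add c d \<in> C) \<and>
     (\<forall>s. \<forall>c\<in>C. smult_word s c \<in> C)"

definition cshift :: "'b list \<Rightarrow> 'b list" where
  "cshift xs = (if xs = [] then [] else last xs # butlast xs)"

definition sigma :: "nat \<Rightarrow> nat \<Rightarrow> ('a::field) word \<Rightarrow> 'a word" where
  "sigma p i c = (map (Theta p i) (cshift (fst c)), map (theta p i) (cshift (snd c)))"

definition is_skew_cyclic :: "nat \<Rightarrow> nat \<Rightarrow> nat \<Rightarrow> nat \<Rightarrow> ('a::field) word set \<Rightarrow> bool" where
  "is_skew_cyclic p i \<alpha> \<beta> C \<longleftrightarrow>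
     is_R_submodule \<alpha> \<beta> C \<and> (\<forall>c\<in>C. sigma p i c \<in> C)"

definition inner :: "('a::field) word \<Rightarrow> 'a word \<Rightarrow> 'a \<times> 'a" where
  "inner l l' = R_add (R_mult R_u (sum_list (map2 (*) (fst l) (fst l')), 0))
                      (R_sum (map2 R_mult (snd l) (snd l')))"

definition dual :: "nat \<Rightarrow> nat \<Rightarrow> ('a::field) word set \<Rightarrow> 'a word set" where
  "dual \<alpha> \<beta> C = {l' \<in> ambient \<alpha> \<beta>. \<forall>l\<in>C. inner l l' = R_zero}"

end

theory Submission
  imports Defs "HOL-Number_Theory.Residues"
begin

lemma length_cshift[simp]: "length (cshift xs) = length xs"
  by (cases xs rule: rev_exhaust) (auto simp: cshift_def)

lemma map_cshift: "map f (cshift xs) = cshift (map f xs)"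
  by (cases xs rule: rev_exhaust) (auto simp: cshift_def)

lemma zip_cshift: "length a = length b \<Longrightarrow> zip (cshift a) (cshift b) = cshift (zip a b)"
proof (cases a rule: rev_exhaust)
  case Nil
  assume "length a = length b" then show ?thesis using Nil by (simp add: cshift_def)
next
  case (snoc a' x)
  assume l: "length a = length b"
  then obtain b' y where b: "b = b' @ [y]" using snoc by (cases b rule: rev_exhaust) auto
  have "length a' = length b'" using l snoc b by simp
  then show ?thesis using snoc b by (simp add: cshift_def)
qed

lemma sum_list_cshift: "sum_list (cshift (xs :: 'b::comm_monoid_add list)) = sum_list xs"
  by (cases xs rule: rev_exhaust) (auto simp: cshift_def add.commute)

lemma inj_cshift: "inj cshift"
proof (rule injI)
  fix xs ys :: "'b list" assume "cshift xs = cshift ys"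
  then show "xs = ys"
    by (cases xs rule: rev_exhaust; cases ys rule: rev_exhaust) (auto simp: cshift_def)
qed

lemma sum_list_zip_nth:
  assumes "length a = length b"
  shows "sum_list (map g (zip a b)) = (\<Sum>k=0..<length a. g (a!k, b!k))"
  using assms by (simp add: sum_list_sum_nth)

lemma sum_cshift:
  assumes "length a = n" "length b = n"
  shows "(\<Sum>k=0..<n. f (cshift a ! k) (cshift b ! k) :: 'c::comm_monoid_add) = (\<Sum>k=0..<n. f (a!k) (b!k))"
proof -
  have "(\<Sum>k=0..<n. f (cshift a ! k) (cshift b ! k)) = sum_list (map (\<lambda>(x,y). f x y) (zip (cshift a) (cshift b)))"
    using assms by (subst sum_list_zip_nth) auto
  also have "\<dots> = sum_list (cshift (map (\<lambda>(x,y). f x y) (zip a b)))"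
    using assms by (simp add: zip_cshift map_cshift)
  also have "\<dots> = sum_list (map (\<lambda>(x,y). f x y) (zip a b))" by (rule sum_list_cshift)
  also have "\<dots> = (\<Sum>k=0..<n. f (a!k) (b!k))"
    using assms by (subst sum_list_zip_nth) auto
  finally show ?thesis .
qed

lemma R_sum_eq: "R_sum rs = (sum_list (map fst rs), sum_list (map snd rs))"
  by (induction rs) (auto simp: R_sum_def R_add_def R_zero_def)

lemma inner_eq:
  assumes "length (fst l) = length (fst l')" "length (snd l) = length (snd l')"
  shows "inner l l' = ((\<Sum>j=0..<length (snd l). fst (R_mult (snd l!j) (snd l'!j))),
     (\<Sum>i=0..<length (fst l). fst l!i * fst l'!i) + (\<Sum>j=0..<length (snd l). snd (R_mult (snd l!j) (snd l'!j))))"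
  using assms
  by (simp add: inner_def R_sum_eq R_add_def R_u_def R_mult_def sum_list_sum_nth)


lemma amb: "l \<in> ambient \<alpha> \<beta> \<longleftrightarrow> length (fst l) = \<alpha> \<and> length (snd l) = \<beta>"
  by (cases l) (simp add: ambient_def)

lemma inner_smult:
  assumes "l \<in> ambient \<alpha> \<beta>" "l' \<in> ambient \<alpha> \<beta>"
  shows "inner (smult_word s l) l' = inner l (smult_word s l')"
  using assms
  by (simp add: amb inner_eq smult_word_def sum_distrib_left R_mult_def eta_def algebra_simps)

lemma inner_add:
  assumes "l \<in> ambient \<alpha> \<beta>" "c \<in> ambient \<alpha> \<beta>" "d \<in> ambient \<alpha> \<beta>"
  shows "inner l (word_add c d) = R_add (inner l c) (inner l d)"
  using assms
  by (simp add: amb inner_eq word_add_def R_add_def R_mult_def sum.distrib algebra_simps)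

lemma inner_zero:
  assumes "l \<in> ambient \<alpha> \<beta>"
  shows "inner l (word_zero \<alpha> \<beta>) = R_zero"
  using assms
  by (simp add: amb inner_eq word_zero_def R_zero_def R_mult_def)

lemma sigma_amb: "l \<in> ambient \<alpha> \<beta> \<Longrightarrow> sigma p i l \<in> ambient \<alpha> \<beta>"
  by (simp add: amb sigma_def)

lemma inner_sigma:
  fixes l l' :: "('a::field) word"
  assumes pr: "prime CHAR('a)" and pc: "p = CHAR('a)"
    and "l \<in> ambient \<alpha> \<beta>" "l' \<in> ambient \<alpha> \<beta>"
    and z: "inner l l' = R_zero"
  shows "inner (sigma p i l) (sigma p i l') = R_zero"
proof -
  define F where "F = (\<lambda>x::'a. x ^ (p ^ i))"
  have Fadd: "F (x + y) = F x + F y" for x y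
    unfolding F_def using freshmans_dream'[OF pr, of "p^i" i] pc by simp
  have Fmul: "F (x * y) = F x * F y" for x y
    unfolding F_def by (simp add: power_mult_distrib)
  have Fsum: "F (sum f A) = (\<Sum>k\<in>A. F (f k))" for f :: "nat \<Rightarrow> 'a" and A
    unfolding F_def using freshmans_dream_sum'[OF pr, of "p^i" i] pc by simp
  have F0: "F 0 = 0" unfolding F_def using pr pc prime_gt_0_nat by simp
  have th: "theta p i r = (F (fst r), F (snd r))" for r
    by (simp add: theta_def F_def)
  have Th: "Theta p i = F" by (simp add: fun_eq_iff Theta_def F_def)
  have m1: "fst (R_mult (theta p i a) (theta p i b)) = F (fst (R_mult a b))" for a b
    by (simp add: th R_mult_def Fmul)
  have m2: "snd (R_mult (theta p i a) (theta p i b)) = F (snd (R_mult a b))" for a b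
    by (simp add: th R_mult_def Fmul Fadd)
  obtain x y where l: "l = (x, y)" by (cases l)
  obtain x' y' where l': "l' = (x', y')" by (cases l')
  have lens: "length x = \<alpha>" "length x' = \<alpha>" "length y = \<beta>" "length y' = \<beta>"
    using assms l l' by (auto simp: amb)
  have "inner (sigma p i l) (sigma p i l') =
     ((\<Sum>j=0..<\<beta>. F (fst (R_mult (cshift y!j) (cshift y'!j)))),
      (\<Sum>k=0..<\<alpha>. F (cshift x!k * cshift x'!k)) + (\<Sum>j=0..<\<beta>. F (snd (R_mult (cshift y!j) (cshift y'!j)))))"
    using lens by (simp add: inner_eq l l' sigma_def Th m1 m2 Fmul)
  also have "\<dots> = ((\<Sum>j=0..<\<beta>. F (fst (R_mult (y!j) (y'!j)))),
      (\<Sum>k=0..<\<alpha>. F (x!k * x'!k)) + (\<Sum>j=0..<\<beta>. F (snd (R_mult (y!j) (y'!j)))))"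
    using lens by (simp add: sum_cshift[where f = "\<lambda>a b. F (fst (R_mult a b))"]
        sum_cshift[where f = "\<lambda>a b. F (snd (R_mult a b))"] sum_cshift[where f = "\<lambda>a b. F (a * b)"])
  also have "\<dots> = (F (fst (inner l l')), F (snd (inner l l')))"
    using lens by (simp add: inner_eq l l' Fsum Fadd)
  also have "\<dots> = R_zero" using z F0 by (simp add: R_zero_def)
  finally show ?thesis .
qed


lemma frob_inj:
  fixes x y :: "'a::field"
  assumes pr: "prime CHAR('a)" and pc: "p = CHAR('a)" and e: "x ^ (p^i) = y ^ (p^i)"
  shows "x = y"
proof -
  have "(x - y + y) ^ (p^i) = (x - y) ^ (p^i) + y ^ (p^i)"
    by (rule freshmans_dream'[OF pr]) (simp add: pc)
  then have "(x - y) ^ (p^i) = 0" using e by simp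
  then show ?thesis by simp
qed

lemma sigma_inj:
  fixes c d :: "('a::field) word"
  assumes pr: "prime CHAR('a)" and pc: "p = CHAR('a)" and e: "sigma p i c = sigma p i d"
  shows "c = d"
proof -
  have iF: "inj (Theta p i :: 'a \<Rightarrow> 'a)"
    by (rule injI) (use frob_inj[OF pr pc] in \<open>auto simp: Theta_def\<close>)
  have it: "inj (theta p i :: 'a \<times> 'a \<Rightarrow> 'a \<times> 'a)"
    by (rule injI) (use frob_inj[OF pr pc] in \<open>auto simp: theta_def prod_eq_iff\<close>)
  have "map (Theta p i) (cshift (fst c)) = map (Theta p i) (cshift (fst d))"
    "map (theta p i) (cshift (snd c)) = map (theta p i) (cshift (snd d))"
    using e by (auto simp: sigma_def)
  then have "cshift (fst c) = cshift (fst d)" "cshift (snd c) = cshift (snd d)"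
    using map_injective iF it by blast+
  then have "fst c = fst d" "snd c = snd d"
    using injD[OF inj_cshift] by blast+
  then show ?thesis by (simp add: prod_eq_iff)
qed

lemma finite_ambient: "finite (ambient \<alpha> \<beta> :: ('a::{finite,field}) word set)"
proof -
  have "ambient \<alpha> \<beta> = {xs :: 'a list. length xs = \<alpha>} \<times> {ys :: ('a\<times>'a) list. length ys = \<beta>}"
    by (auto simp: ambient_def)
  moreover have "finite {xs :: 'a list. length xs = \<alpha>}"
    using finite_lists_length_eq[of "UNIV :: 'a set" \<alpha>] by simp
  moreover have "finite {ys :: ('a\<times>'a) list. length ys = \<beta>}"
    using finite_lists_length_eq[of "UNIV :: ('a\<times>'a) set" \<beta>] by simp
  ultimately show ?thesis by simp
qed

theorem theorem3:
  fixes p m i \<alpha> \<beta> :: nat and C :: "('a::{finite,field}) word set"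
  assumes "prime p" and "card (UNIV :: 'a set) = p ^ m"
    and "0 < \<alpha>" and "0 < \<beta>"
    and "is_skew_cyclic p i \<alpha> \<beta> C"
    and "theta_order p i TYPE('a) dvd \<beta>"
  shows "is_skew_cyclic p i \<alpha> \<beta> (dual \<alpha> \<beta> C)"
proof -
  have cp: "CHAR('a) > 0" by (rule finite_imp_CHAR_pos) simp
  have pr: "prime CHAR('a)" by (rule prime_CHAR_semidom[OF cp])
  have "CHAR('a) dvd p ^ m" using CHAR_dvd_CARD[where 'a='a] assms(2) by simp
  then have "CHAR('a) dvd p" using pr prime_dvd_power by blast
  then have pc: "p = CHAR('a)" using primes_dvd_imp_eq[OF pr assms(1)] by simp
  have sub: "C \<subseteq> ambient \<alpha> \<beta>" "word_zero \<alpha> \<beta> \<in> C"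
    "\<And>s c. c \<in> C \<Longrightarrow> smult_word s c \<in> C" "\<And>c. c \<in> C \<Longrightarrow> sigma p i c \<in> C"
    using assms(5) by (auto simp: is_skew_cyclic_def is_R_submodule_def)
  have finC: "finite C" using finite_subset[OF sub(1) finite_ambient] .
  have surj: "sigma p i ` C = C"
    by (rule endo_inj_surj[OF finC]) (use sub(4) sigma_inj[OF pr pc] in \<open>auto intro: inj_onI\<close>)
  let ?D = "dual \<alpha> \<beta> C"
  have D1: "?D \<subseteq> ambient \<alpha> \<beta>" by (auto simp: dual_def)
  have D2: "word_zero \<alpha> \<beta> \<in> ?D"
  proof -
    have "word_zero \<alpha> \<beta> \<in> ambient \<alpha> \<beta>" by (simp add: amb word_zero_def)
    moreover have "inner l (word_zero \<alpha> \<beta>) = R_zero" if "l \<in> C" for l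
      using inner_zero[OF subsetD[OF sub(1) that]] .
    ultimately show ?thesis by (simp add: dual_def)
  qed
  have D3: "word_add c d \<in> ?D" if "c \<in> ?D" "d \<in> ?D" for c d
  proof -
    have a: "c \<in> ambient \<alpha> \<beta>" "d \<in> ambient \<alpha> \<beta>" using that by (auto simp: dual_def)
    have "word_add c d \<in> ambient \<alpha> \<beta>" using a by (simp add: amb word_add_def)
    moreover have "inner l (word_add c d) = R_zero" if "l \<in> C" for l
      using inner_add[OF subsetD[OF sub(1) that] a] that \<open>c \<in> ?D\<close> \<open>d \<in> ?D\<close>
      by (simp add: dual_def R_add_def R_zero_def)
    ultimately show ?thesis by (simp add: dual_def)
  qed
  have D4: "smult_word s c \<in> ?D" if "c \<in> ?D" for s c
  proof -
    have a: "c \<in> ambient \<alpha> \<beta>" using that by (auto simp: dual_def)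
    have "smult_word s c \<in> ambient \<alpha> \<beta>" using a by (simp add: amb smult_word_def)
    moreover have "inner l (smult_word s c) = R_zero" if "l \<in> C" for l
      using inner_smult[OF subsetD[OF sub(1) that] a, of s, symmetric] sub(3)[OF that, of s] \<open>c \<in> ?D\<close>
      by (simp add: dual_def)
    ultimately show ?thesis by (simp add: dual_def)
  qed
  have D5: "sigma p i c \<in> ?D" if "c \<in> ?D" for c
  proof -
    have a: "c \<in> ambient \<alpha> \<beta>" using that by (auto simp: dual_def)
    have "sigma p i c \<in> ambient \<alpha> \<beta>" using a by (rule sigma_amb)
    moreover have "inner l (sigma p i c) = R_zero" if "l \<in> C" for l
    proof -
      obtain d where d: "d \<in> C" "l = sigma p i d" using \<open>l \<in> C\<close> surj by blast
      have "inner d c = R_zero" using d(1) \<open>c \<in> ?D\<close> by (simp add: dual_def)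
      then show ?thesis using inner_sigma[OF pr pc subsetD[OF sub(1) d(1)] a] d(2) by simp
    qed
    ultimately show ?thesis by (simp add: dual_def)
  qed
  show ?thesis using D1 D2 D3 D4 D5 by (simp add: is_skew_cyclic_def is_R_submodule_def)
qed

end
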